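(* Let $K\subset\mathbb{R}^d$, $d\ge 2$, be a convex body and $\delta\in(0,1)$. Then $\delta\neq\tfrac12$ if and only if for every point $x\in\partial K$ and every $(d-2)$-dimensional affine subspace $\ell$ with $x\in\ell$ and $\ell\cap\operatorname{int}K=\emptyset$, there exist two distinct hyperplanes of the form $\{y: y\cdot\theta=t_K(\theta,\delta)\}$, $\theta\in\mathbb{S}^{d-1}$ (i.e. hyperplanes supporting $K_{[\delta]}$), that contain $\ell$.
   Context: For $\theta\in\mathbb{S}^{d-1}$, $t\in\mathbb{R}$ let $H^-(\theta,t)=\{x:x\cdot\theta\ge t\}$. For a convex body $K$ and $\delta\in(0,1)$, $t_K(\theta,\delta)$ is the unique real number with $|K\cap H^-(\theta,t_K(\theta,\delta))|_d=\delta|K|_d$. The surface of flotation $K_{[\delta]}$ is the envelope of the hyperplanes $\{y:y\cdot\theta=t_K(\theta,\delta)\}$, $\theta\in\mathbb{S}^{d-1}$. *)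

theory Defs
  imports "HOL-Analysis.Analysis"
begin

definition convex_body :: "'a::euclidean_space set \<Rightarrow> bool" where
  "convex_body K \<longleftrightarrow> convex K \<and> compact K \<and> interior K \<noteq> {}"

definition Hminus :: "'a::euclidean_space \<Rightarrow> real \<Rightarrow> 'a set" where
  "Hminus \<theta> t = {x. x \<bullet> \<theta> \<ge> t}"

definition tK :: "'a::euclidean_space set \<Rightarrow> 'a \<Rightarrow> real \<Rightarrow> real" where
  "tK K \<theta> \<delta> = (THE t. measure lebesgue (K \<inter> Hminus \<theta> t) = \<delta> * measure lebesgue K)"

definition flot_hyperplane :: "'a::euclidean_space set \<Rightarrow> real \<Rightarrow> 'a \<Rightarrow> 'a set" where
  "flot_hyperplane K \<delta> \<theta> = {y. y \<bullet> \<theta> = tK K \<theta> \<delta>}"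

end

theory Submission
  imports Defs
begin


lemma ball_meas_pos:
  fixes c :: "'a::euclidean_space"
  assumes "r > 0" shows "0 < measure lebesgue (ball c r)"
  using content_ball_pos[OF assms, of c] by (simp add: measure_completion)

lemma open_meas_pos:
  fixes S :: "'a::euclidean_space set"
  assumes "open S" "S \<noteq> {}" "bounded S"
  shows "0 < measure lebesgue S"
proof -
  obtain a where "a \<in> S" using assms by auto
  then obtain r where r: "r > 0" "ball a r \<subseteq> S" using assms(1) open_contains_ball by blast
  have "measure lebesgue (ball a r) \<le> measure lebesgue S"
    by (rule measure_mono_fmeasurable) (use r assms lmeasurable_open in auto)
  thus ?thesis using ball_meas_pos[OF r(1), of a] by linarith
qed

lemma hyp_null:
  fixes \<theta> :: "'a::euclidean_space"
  assumes "\<theta> \<noteq> 0"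
  shows "{y. y \<bullet> \<theta> = c} \<in> null_sets lebesgue"
proof -
  have "negligible {y. \<theta> \<bullet> y = c}" using negligible_hyperplane assms by blast
  thus ?thesis by (simp add: negligible_iff_null_sets inner_commute)
qed

lemma pos_int:
  fixes K :: "'a::euclidean_space set"
  assumes "convex K" "compact K" "S \<subseteq> K" "0 < measure lebesgue S"
  shows "\<exists>p\<in>S. p \<in> interior K"
proof (rule ccontr)
  assume "\<not> ?thesis"
  then have "S \<subseteq> frontier K" using assms compact_imp_closed frontier_def closure_closed by fastforce
  then have "negligible S" using negligible_subset negligible_convex_frontier assms(1) by blast
  thus False using negligible_imp_measure0 assms by force
qed



lemma closed_sets_leb: "closed (S::'a::euclidean_space set) \<Longrightarrow> S \<in> sets lebesgue"
  by (simp add: borel_closed sets_completionI_sets)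
lemma open_sets_leb: "open (S::'a::euclidean_space set) \<Longrightarrow> S \<in> sets lebesgue"
  by (simp add: borel_open sets_completionI_sets)

lemma hs_sets: "{y::'a::euclidean_space. y \<bullet> \<theta> \<ge> c} \<in> sets lebesgue"
  by (rule closed_sets_leb) (intro closed_Collect_le continuous_intros)
lemma hs_sets2: "{y::'a::euclidean_space. y \<bullet> \<theta> > c} \<in> sets lebesgue"
  by (rule open_sets_leb) (intro open_Collect_less continuous_intros)
lemma hs_sets3: "{y::'a::euclidean_space. y \<bullet> \<theta> < c} \<in> sets lebesgue"
  by (rule open_sets_leb) (intro open_Collect_less continuous_intros)
lemma hs_sets4: "{y::'a::euclidean_space. y \<bullet> \<theta> \<le> c} \<in> sets lebesgue"
  by (rule closed_sets_leb) (intro closed_Collect_le continuous_intros)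

lemma meas_cont:
  fixes K :: "'a::euclidean_space set"
  assumes "compact K" "\<theta> \<noteq> 0" "\<theta>n \<longlonglongrightarrow> \<theta>" "cn \<longlonglongrightarrow> c"
  shows "(\<lambda>n. measure lebesgue (K \<inter> {y. y \<bullet> \<theta>n n \<ge> cn n})) \<longlonglongrightarrow> measure lebesgue (K \<inter> {y. y \<bullet> \<theta> \<ge> c})"
proof -
  have Ks: "K \<in> sets lebesgue" using assms(1) lmeasurable_compact by blast
  have Kf: "emeasure lebesgue K < \<infinity>" using assms(1) lmeasurable_compact
    by (metis fmeasurableD2 infinity_ennreal_def top.not_eq_extremum)
  have "(\<lambda>n. integral\<^sup>L lebesgue (indicator (K \<inter> {y. y \<bullet> \<theta>n n \<ge> cn n}) :: 'a \<Rightarrow> real))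
     \<longlonglongrightarrow> integral\<^sup>L lebesgue (indicator (K \<inter> {y. y \<bullet> \<theta> \<ge> c}))"
  proof (rule integral_dominated_convergence[where w="indicator K"])
    show "indicator (K \<inter> {y. c \<le> y \<bullet> \<theta>}) \<in> borel_measurable lebesgue"
      using Ks hs_sets by (intro borel_measurable_indicator) auto
    show "indicator (K \<inter> {y. cn n \<le> y \<bullet> \<theta>n n}) \<in> borel_measurable lebesgue" for n
      using Ks hs_sets by (intro borel_measurable_indicator) auto
    show "integrable lebesgue (indicator K :: 'a \<Rightarrow> real)"
      using Ks Kf by (simp add: integrable_indicator_iff)
    show "AE x in lebesgue. norm (indicator (K \<inter> {y. cn n \<le> y \<bullet> \<theta>n n}) x :: real) \<le> indicator K x" for n
      by (auto simp: indicator_def)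
    have "AE x in lebesgue. x \<notin> {y. y \<bullet> \<theta> = c}"
      using hyp_null[OF assms(2)] by (rule AE_not_in)
    then show "AE x in lebesgue. (\<lambda>n. indicator (K \<inter> {y. cn n \<le> y \<bullet> \<theta>n n}) x :: real)
        \<longlonglongrightarrow> indicator (K \<inter> {y. c \<le> y \<bullet> \<theta>}) x"
    proof (rule AE_mp, intro AE_I2 impI)
      fix x assume "x \<notin> {y. y \<bullet> \<theta> = c}" 
      then have ne: "x \<bullet> \<theta> - c \<noteq> 0" by auto
      have lim: "(\<lambda>n. x \<bullet> \<theta>n n - cn n) \<longlonglongrightarrow> x \<bullet> \<theta> - c"
        by (intro tendsto_intros assms)
      have ev: "eventually (\<lambda>n. (cn n \<le> x \<bullet> \<theta>n n) = (c \<le> x \<bullet> \<theta>)) sequentially"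
      proof (cases "x \<bullet> \<theta> - c > 0")
        case True
        then have "eventually (\<lambda>n. x \<bullet> \<theta>n n - cn n > 0) sequentially"
          using lim order_tendstoD(1) by blast
        then show ?thesis using True by (auto elim: eventually_mono)
      next
        case False
        then have F: "x \<bullet> \<theta> - c < 0" using ne by linarith
        then have "eventually (\<lambda>n. x \<bullet> \<theta>n n - cn n < 0) sequentially"
          using lim order_tendstoD(2) by blast
        then show ?thesis using F by (auto elim: eventually_mono)
      qed
      show "(\<lambda>n. indicator (K \<inter> {y. cn n \<le> y \<bullet> \<theta>n n}) x :: real)
        \<longlonglongrightarrow> indicator (K \<inter> {y. c \<le> y \<bullet> \<theta>}) x"
        by (rule tendsto_eventually) (use ev in \<open>eventually_elim, auto simp: indicator_def\<close>)
    qed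
  qed
  then show ?thesis by simp
qed



lemma lmeas_Int: "S \<in> lmeasurable \<Longrightarrow> T \<in> sets lebesgue \<Longrightarrow> S \<inter> T \<in> lmeasurable"
  by (rule fmeasurable_Int_fmeasurable)

lemma lfin: "S \<in> lmeasurable \<Longrightarrow> emeasure lebesgue S \<noteq> \<infinity>"
  by (metis fmeasurableD2 infinity_ennreal_def)

lemma meas_split:
  fixes S :: "'a::euclidean_space set"
  assumes "S \<in> lmeasurable" "\<theta> \<noteq> 0"
  shows "measure lebesgue S = measure lebesgue (S \<inter> {y. y \<bullet> \<theta> > c}) + measure lebesgue (S \<inter> {y. y \<bullet> \<theta> < c})"
proof -
  have e: "S - {y. y \<bullet> \<theta> = c} = (S \<inter> {y. y \<bullet> \<theta> > c}) \<union> (S \<inter> {y. y \<bullet> \<theta> < c})" by auto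
  have "measure lebesgue S = measure lebesgue (S - {y. y \<bullet> \<theta> = c})"
    using measure_Diff_null_set[OF fmeasurableD[OF assms(1)] hyp_null[OF assms(2)]] by simp
  also have "\<dots> = measure lebesgue (S \<inter> {y. y \<bullet> \<theta> > c}) + measure lebesgue (S \<inter> {y. y \<bullet> \<theta> < c})"
    unfolding e
    using lmeas_Int[OF assms(1) hs_sets2, of c \<theta>] lmeas_Int[OF assms(1) hs_sets3, of \<theta> c]
    by (intro measure_Union lfin fmeasurableD) auto
  finally show ?thesis .
qed

lemma meas_ge_gt:
  fixes S :: "'a::euclidean_space set"
  assumes "S \<in> lmeasurable" "\<theta> \<noteq> 0"
  shows "measure lebesgue (S \<inter> {y. y \<bullet> \<theta> \<ge> c}) = measure lebesgue (S \<inter> {y. y \<bullet> \<theta> > c})"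
proof -
  have "measure lebesgue (S \<inter> {y. y \<bullet> \<theta> \<ge> c}) = measure lebesgue (S \<inter> {y. y \<bullet> \<theta> \<ge> c} - {y. y \<bullet> \<theta> = c})"
    using measure_Diff_null_set[OF fmeasurableD[OF lmeas_Int[OF assms(1) hs_sets]] hyp_null[OF assms(2)]] by simp
  also have "S \<inter> {y. y \<bullet> \<theta> \<ge> c} - {y. y \<bullet> \<theta> = c} = S \<inter> {y. y \<bullet> \<theta> > c}" by auto
  finally show ?thesis .
qed

lemma meas_le_lt:
  fixes S :: "'a::euclidean_space set"
  assumes "S \<in> lmeasurable" "\<theta> \<noteq> 0"
  shows "measure lebesgue (S \<inter> {y. y \<bullet> \<theta> \<le> c}) = measure lebesgue (S \<inter> {y. y \<bullet> \<theta> < c})"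
proof -
  have "measure lebesgue (S \<inter> {y. y \<bullet> \<theta> \<le> c}) = measure lebesgue (S \<inter> {y. y \<bullet> \<theta> \<le> c} - {y. y \<bullet> \<theta> = c})"
    using measure_Diff_null_set[OF fmeasurableD[OF lmeas_Int[OF assms(1) hs_sets4]] hyp_null[OF assms(2)]] by simp
  also have "S \<inter> {y. y \<bullet> \<theta> \<le> c} - {y. y \<bullet> \<theta> = c} = S \<inter> {y. y \<bullet> \<theta> < c}" by auto
  finally show ?thesis .
qed

lemma body_pos:
  fixes K :: "'a::euclidean_space set"
  assumes "compact K" "interior K \<noteq> {}"
  shows "0 < measure lebesgue K"
proof -
  have "0 < measure lebesgue (interior K)"
    using assms by (intro open_meas_pos) (auto intro: bounded_subset[OF compact_imp_bounded] interior_subset)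
  also have "\<dots> \<le> measure lebesgue K"
    using assms lmeasurable_compact interior_subset
    by (intro measure_mono_fmeasurable) (auto intro: open_sets_leb)
  finally show ?thesis .
qed



lemma int_bounded: "compact K \<Longrightarrow> bounded (interior K \<inter> T)"
  by (meson bounded_subset compact_imp_bounded inf.coboundedI1 interior_subset)

lemma t_uniq_lt:
  fixes K :: "'a::euclidean_space set"
  assumes K: "convex K" "compact K" "interior K \<noteq> {}" and th: "\<theta> \<noteq> 0" and d: "0 < \<delta>" "\<delta> < 1"
    and lt: "t1 < t2"
    and m1: "measure lebesgue (K \<inter> Hminus \<theta> t1) = \<delta> * measure lebesgue K"
    and m2: "measure lebesgue (K \<inter> Hminus \<theta> t2) = \<delta> * measure lebesgue K"
  shows False
proof -
  have Kl: "K \<in> lmeasurable" using K lmeasurable_compact by blast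
  have mK: "0 < measure lebesgue K" using body_pos K by blast
  have H: "Hminus \<theta> t = {y. y \<bullet> \<theta> \<ge> t}" for t by (simp add: Hminus_def)
  have "measure lebesgue (K \<inter> {y. y \<bullet> \<theta> > t2}) > 0"
    using m2 meas_ge_gt[OF Kl th, of t2] mK d by (simp add: H)
  then obtain p where p: "p \<in> interior K" "p \<bullet> \<theta> > t2"
    using pos_int[OF K(1,2), of "K \<inter> {y. y \<bullet> \<theta> > t2}"] by auto
  have "measure lebesgue K = measure lebesgue (K \<inter> {y. y \<bullet> \<theta> > t1}) + measure lebesgue (K \<inter> {y. y \<bullet> \<theta> < t1})"
    using meas_split[OF Kl th] .
  moreover have "measure lebesgue (K \<inter> {y. y \<bullet> \<theta> > t1}) = \<delta> * measure lebesgue K"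
    using m1 meas_ge_gt[OF Kl th, of t1] by (simp add: H)
  moreover have "\<delta> * measure lebesgue K < measure lebesgue K" using mK d by simp
  ultimately have "measure lebesgue (K \<inter> {y. y \<bullet> \<theta> < t1}) > 0" by linarith
  then obtain q where q: "q \<in> interior K" "q \<bullet> \<theta> < t1"
    using pos_int[OF K(1,2), of "K \<inter> {y. y \<bullet> \<theta> < t1}"] by auto
  define m where "m = (t1 + t2) / 2"
  define s where "s = (p \<bullet> \<theta> - m) / (p \<bullet> \<theta> - q \<bullet> \<theta>)"
  have s01: "0 \<le> s" "s \<le> 1" using p(2) q(2) lt by (auto simp: s_def m_def field_simps)
  define w where "w = (1 - s) *\<^sub>R p + s *\<^sub>R q"
  have wK: "w \<in> interior K" unfolding w_def
    using convexD[OF convex_interior[OF K(1)] p(1) q(1)] s01 by auto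
  have "w \<bullet> \<theta> = p \<bullet> \<theta> - s * (p \<bullet> \<theta> - q \<bullet> \<theta>)" by (simp add: w_def algebra_simps)
  also have "\<dots> = m" using p(2) q(2) lt by (simp add: s_def)
  finally have wm: "w \<bullet> \<theta> = m" .
  define Ow where "Ow = interior K \<inter> ({y. y \<bullet> \<theta> > t1} \<inter> {y. y \<bullet> \<theta> < t2})"
  have Oo: "open Ow" unfolding Ow_def
    by (intro open_Int open_interior open_Collect_less continuous_intros)
  have "w \<in> Ow" using wK wm lt by (simp add: Ow_def m_def)
  then have "0 < measure lebesgue Ow"
    using Oo int_bounded[OF K(2)] unfolding Ow_def by (intro open_meas_pos) auto
  also have "\<dots> \<le> measure lebesgue (K \<inter> Hminus \<theta> t1 - K \<inter> Hminus \<theta> t2)"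
  proof (rule measure_mono_fmeasurable)
    show "Ow \<subseteq> K \<inter> Hminus \<theta> t1 - K \<inter> Hminus \<theta> t2"
      unfolding Ow_def H using interior_subset[of K] by auto
    show "Ow \<in> sets lebesgue" using Oo by (rule open_sets_leb)
    show "K \<inter> Hminus \<theta> t1 - K \<inter> Hminus \<theta> t2 \<in> lmeasurable"
      unfolding H by (intro fmeasurable.Diff lmeas_Int[OF Kl] hs_sets fmeasurableD)
  qed
  also have "\<dots> = measure lebesgue (K \<inter> Hminus \<theta> t1) - measure lebesgue (K \<inter> Hminus \<theta> t2)"
  proof (rule measure_Diff)
    show "emeasure lebesgue (K \<inter> Hminus \<theta> t1) \<noteq> \<infinity>" unfolding H by (intro lfin lmeas_Int[OF Kl] hs_sets)
    show "K \<inter> Hminus \<theta> t1 \<in> sets lebesgue" unfolding H by (intro fmeasurableD lmeas_Int[OF Kl] hs_sets)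
    show "K \<inter> Hminus \<theta> t2 \<in> sets lebesgue" unfolding H by (intro fmeasurableD lmeas_Int[OF Kl] hs_sets)
    show "K \<inter> Hminus \<theta> t2 \<subseteq> K \<inter> Hminus \<theta> t1" unfolding H using lt by auto
  qed
  finally show False using m1 m2 by simp
qed



lemma t_exists:
  fixes K :: "'a::euclidean_space set"
  assumes K: "compact K" and th: "\<theta> \<noteq> 0" and d: "0 \<le> \<delta>" "\<delta> \<le> 1"
  shows "\<exists>t. measure lebesgue (K \<inter> Hminus \<theta> t) = \<delta> * measure lebesgue K"
proof -
  define f where "f t = measure lebesgue (K \<inter> {y. y \<bullet> \<theta> \<ge> t})" for t
  obtain R where R: "R > 0" "\<And>y. y \<in> K \<Longrightarrow> norm y \<le> R" using compact_imp_bounded[OF K] bounded_pos by blast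
  define a where "a = - R * norm \<theta> - 1"
  define b where "b = R * norm \<theta> + 1"
  have ab: "a \<le> b" using R by (simp add: a_def b_def)
  have bnd: "\<bar>y \<bullet> \<theta>\<bar> \<le> R * norm \<theta>" if "y \<in> K" for y
    using Cauchy_Schwarz_ineq2[of y \<theta>] R(2)[OF that] mult_right_mono norm_ge_zero order_trans by blast
  have "K \<inter> {y. y \<bullet> \<theta> \<ge> a} = K" using bnd by (force simp: a_def abs_le_iff)
  then have fa: "f a = measure lebesgue K" by (simp add: f_def)
  have "K \<inter> {y. y \<bullet> \<theta> \<ge> b} = {}" using bnd by (force simp: b_def abs_le_iff)
  then have fb: "f b = 0" by (simp add: f_def)
  have mK0: "0 \<le> measure lebesgue K" by simp
  have cont: "continuous_on {a..b} f"
    unfolding continuous_on_sequentially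
  proof (intro allI ballI impI)
    fix x :: "nat \<Rightarrow> real" and t assume "(\<forall>n. x n \<in> {a..b}) \<and> x \<longlonglongrightarrow> t"
    then have "x \<longlonglongrightarrow> t" by blast
    from meas_cont[OF K th tendsto_const this]
    show "(f \<circ> x) \<longlonglongrightarrow> f t" by (simp add: f_def o_def)
  qed
  have "f b \<le> \<delta> * measure lebesgue K" "\<delta> * measure lebesgue K \<le> f a"
    using fa fb d mK0 mult_right_mono[OF d(2) mK0] by auto
  from IVT2'[OF this ab cont] obtain t where "f t = \<delta> * measure lebesgue K" by blast
  then show ?thesis by (auto simp: f_def Hminus_def)
qed

lemma tK_eq:
  fixes K :: "'a::euclidean_space set"
  assumes K: "convex_body K" and th: "\<theta> \<noteq> 0" and d: "0 < \<delta>" "\<delta> < 1"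
    and m: "measure lebesgue (K \<inter> Hminus \<theta> t) = \<delta> * measure lebesgue K"
  shows "tK K \<theta> \<delta> = t"
  unfolding tK_def
proof (rule the_equality)
  show "measure lebesgue (K \<inter> Hminus \<theta> t) = \<delta> * measure lebesgue K" by fact
  fix s assume s: "measure lebesgue (K \<inter> Hminus \<theta> s) = \<delta> * measure lebesgue K"
  have KK: "convex K" "compact K" "interior K \<noteq> {}" using K by (auto simp: convex_body_def)
  show "s = t"
  proof (rule linorder_cases[of s t])
    assume "s < t" then show ?thesis using t_uniq_lt[OF KK th d _ s m] by blast
  next
    assume "t < s" then show ?thesis using t_uniq_lt[OF KK th d _ m s] by blast
  qed
qed

lemma tK_prop:
  fixes K :: "'a::euclidean_space set"
  assumes K: "convex_body K" and th: "\<theta> \<noteq> 0" and d: "0 < \<delta>" "\<delta> < 1"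
  shows "measure lebesgue (K \<inter> Hminus \<theta> (tK K \<theta> \<delta>)) = \<delta> * measure lebesgue K"
proof -
  obtain t where t: "measure lebesgue (K \<inter> Hminus \<theta> t) = \<delta> * measure lebesgue K"
    using t_exists[of K \<theta> \<delta>] K th d by (auto simp: convex_body_def)
  then show ?thesis using tK_eq[OF K th d t] by simp
qed



lemma sep_affine:
  fixes K :: "'a::euclidean_space set"
  assumes K: "convex_body K" and L: "affine L" "x \<in> L" "L \<inter> interior K = {}"
  shows "\<exists>u. norm u = 1 \<and> (\<forall>y\<in>L. (y - x) \<bullet> u = 0) \<and> (\<forall>z\<in>K. z \<bullet> u \<ge> x \<bullet> u)"
proof -
  have KK: "convex K" "compact K" "interior K \<noteq> {}" using K by (auto simp: convex_body_def)
  define C where "C = {z + y - 2 *\<^sub>R x | z y. z \<in> interior K \<and> y \<in> L}"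
  have aff: "(1 - s) *\<^sub>R y1 + s *\<^sub>R y2 \<in> L" if "y1 \<in> L" "y2 \<in> L" for s y1 y2
    using L(1) that unfolding affine_def by auto
  have cC: "convex C" unfolding convex_alt
  proof (intro ballI allI impI)
    fix c1 c2 and s :: real assume c: "c1 \<in> C" "c2 \<in> C" "0 \<le> s \<and> s \<le> 1"
    obtain z1 y1 where 1: "c1 = z1 + y1 - 2 *\<^sub>R x" "z1 \<in> interior K" "y1 \<in> L" using c(1) C_def by blast
    obtain z2 y2 where 2: "c2 = z2 + y2 - 2 *\<^sub>R x" "z2 \<in> interior K" "y2 \<in> L" using c(2) C_def by blast
    have "(1 - s) *\<^sub>R z1 + s *\<^sub>R z2 \<in> interior K"
      using convexD[OF convex_interior[OF KK(1)] 1(2) 2(2), of "1-s" s] c(3) by auto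
    moreover have "(1 - s) *\<^sub>R y1 + s *\<^sub>R y2 \<in> L" using aff 1(3) 2(3) by blast
    moreover have "(1 - s) *\<^sub>R c1 + s *\<^sub>R c2 = ((1 - s) *\<^sub>R z1 + s *\<^sub>R z2) + ((1 - s) *\<^sub>R y1 + s *\<^sub>R y2) - 2 *\<^sub>R x"
      by (simp add: 1(1) 2(1) algebra_simps)
    ultimately show "(1 - s) *\<^sub>R c1 + s *\<^sub>R c2 \<in> C" unfolding C_def by blast
  qed
  have "0 \<notin> C"
  proof
    assume "0 \<in> C"
    then obtain z y where zy: "0 = z + y - 2 *\<^sub>R x" "z \<in> interior K" "y \<in> L" unfolding C_def by blast
    have "(1 - 2) *\<^sub>R y + 2 *\<^sub>R x \<in> L" using aff[OF zy(3) L(2), of 2] by simp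
    moreover have "(1 - 2) *\<^sub>R y + 2 *\<^sub>R x = z" using zy(1) by (simp add: algebra_simps eq_diff_eq)
    ultimately show False using zy(2) L(3) by blast
  qed
  then obtain a where a: "a \<noteq> 0" "\<And>c. c \<in> C \<Longrightarrow> 0 \<le> a \<bullet> c"
    using separating_hyperplane_set_0[OF cC] by blast
  obtain z0 where z0: "z0 \<in> interior K" using KK(3) by blast
  have aL: "(y - x) \<bullet> a = 0" if y: "y \<in> L" for y
  proof (rule ccontr)
    assume ne: "(y - x) \<bullet> a \<noteq> 0"
    define k where "k = - (\<bar>a \<bullet> (z0 - x)\<bar> + 1) / ((y - x) \<bullet> a)"
    have "z0 + ((1 - k) *\<^sub>R x + k *\<^sub>R y) - 2 *\<^sub>R x \<in> C"
      unfolding C_def using z0 aff[OF L(2) y] by blast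
    then have "0 \<le> a \<bullet> (z0 + ((1 - k) *\<^sub>R x + k *\<^sub>R y) - 2 *\<^sub>R x)" by (rule a(2))
    also have "a \<bullet> (z0 + ((1 - k) *\<^sub>R x + k *\<^sub>R y) - 2 *\<^sub>R x) = a \<bullet> (z0 - x) + k * ((y - x) \<bullet> a)"
      by (simp add: algebra_simps inner_commute)
    also have "k * ((y - x) \<bullet> a) = - (\<bar>a \<bullet> (z0 - x)\<bar> + 1)" using ne by (simp add: k_def)
    finally show False by linarith
  qed
  have intK: "interior K \<subseteq> {z. a \<bullet> z \<ge> a \<bullet> x}"
  proof
    fix z assume "z \<in> interior K"
    then have "z + x - 2 *\<^sub>R x \<in> C" unfolding C_def using L(2) by blast
    then have "0 \<le> a \<bullet> (z + x - 2 *\<^sub>R x)" by (rule a(2))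
    then show "z \<in> {z. a \<bullet> z \<ge> a \<bullet> x}" by (simp add: algebra_simps inner_diff_right)
  qed
  have "closure (interior K) \<subseteq> {z. a \<bullet> z \<ge> a \<bullet> x}"
    by (rule closure_minimal[OF intK]) (intro closed_Collect_le continuous_intros)
  then have Ka: "K \<subseteq> {z. a \<bullet> z \<ge> a \<bullet> x}"
    using convex_closure_interior[OF KK(1,3)] closure_closed[OF compact_imp_closed[OF KK(2)]] by simp
  define u where "u = a /\<^sub>R norm a"
  have "norm u = 1" using a(1) by (simp add: u_def)
  moreover have "\<forall>y\<in>L. (y - x) \<bullet> u = 0" using aL by (simp add: u_def)
  moreover have "\<forall>z\<in>K. z \<bullet> u \<ge> x \<bullet> u"
  proof
    fix z assume "z \<in> K"
    then have "a \<bullet> z \<ge> a \<bullet> x" using Ka by blast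
    then have "(a \<bullet> z) / norm a \<ge> (a \<bullet> x) / norm a" by (simp add: divide_right_mono)
    then show "z \<bullet> u \<ge> x \<bullet> u" by (simp add: u_def inner_commute divide_inverse mult.commute)
  qed
  ultimately show ?thesis by blast
qed



definition halv :: "'a::euclidean_space set \<Rightarrow> 'a \<Rightarrow> 'a \<Rightarrow> bool" where
  "halv K x e \<longleftrightarrow> measure lebesgue (K \<inter> {y. y \<bullet> e > x \<bullet> e}) = measure lebesgue K / 2 \<and>
                   measure lebesgue (K \<inter> {y. y \<bullet> e < x \<bullet> e}) = measure lebesgue K / 2"

lemma halv_neg: "halv K x e \<Longrightarrow> halv K x (- e)"
  unfolding halv_def by auto

lemma core:
  fixes K :: "'a::euclidean_space set"
  assumes KK: "convex K" "compact K" "interior K \<noteq> {}"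
    and e: "norm e1 = 1" "norm e2 = 1" "e1 \<noteq> - e2"
    and h1: "halv K x e1" and h2: "halv K x e2"
    and A: "\<And>y. y \<in> K \<Longrightarrow> y \<bullet> e1 > x \<bullet> e1 \<Longrightarrow> y \<bullet> e2 > x \<bullet> e2 \<Longrightarrow> False"
  shows False
proof -
  have Kl: "K \<in> lmeasurable" using KK lmeasurable_compact by blast
  have mK: "0 < measure lebesgue K" using body_pos KK by blast
  have e0: "e1 \<noteq> 0" "e2 \<noteq> 0" using e by auto
  define S1 where "S1 = K \<inter> {y. y \<bullet> e1 > x \<bullet> e1}"
  define S2 where "S2 = K \<inter> {y. y \<bullet> e2 < x \<bullet> e2}"
  have S1l: "S1 \<in> lmeasurable" unfolding S1_def by (intro lmeas_Int[OF Kl] hs_sets2)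
  have S2l: "S2 \<in> lmeasurable" unfolding S2_def by (intro lmeas_Int[OF Kl] hs_sets3)
  have "S1 \<inter> {y. y \<bullet> e2 > x \<bullet> e2} = {}" using A by (auto simp: S1_def)
  then have "measure lebesgue S1 = measure lebesgue (S1 \<inter> {y. y \<bullet> e2 < x \<bullet> e2})"
    using meas_split[OF S1l e0(2), of "x \<bullet> e2"] by simp
  then have mB: "measure lebesgue (S1 \<inter> {y. y \<bullet> e2 < x \<bullet> e2}) = measure lebesgue K / 2"
    using h1 by (simp add: halv_def S1_def)
  have "S2 \<inter> {y. y \<bullet> e1 > x \<bullet> e1} = S1 \<inter> {y. y \<bullet> e2 < x \<bullet> e2}" by (auto simp: S1_def S2_def)
  then have mD: "measure lebesgue (S2 \<inter> {y. y \<bullet> e1 < x \<bullet> e1}) = 0"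
    using meas_split[OF S2l e0(1), of "x \<bullet> e1"] mB h2 by (simp add: halv_def S2_def)
  define D where "D = interior K \<inter> ({y. y \<bullet> e1 < x \<bullet> e1} \<inter> {y. y \<bullet> e2 < x \<bullet> e2})"
  have Do: "open D" unfolding D_def
    by (intro open_Int open_interior open_Collect_less continuous_intros)
  have D0: "D = {}"
  proof (rule ccontr)
    assume "D \<noteq> {}"
    then have "0 < measure lebesgue D"
      using Do int_bounded[OF KK(2)] unfolding D_def by (intro open_meas_pos) auto
    also have "\<dots> \<le> measure lebesgue (S2 \<inter> {y. y \<bullet> e1 < x \<bullet> e1})"
    proof (rule measure_mono_fmeasurable)
      show "D \<subseteq> S2 \<inter> {y. y \<bullet> e1 < x \<bullet> e1}" unfolding D_def S2_def using interior_subset[of K] by auto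
      show "D \<in> sets lebesgue" using Do by (rule open_sets_leb)
      show "S2 \<inter> {y. y \<bullet> e1 < x \<bullet> e1} \<in> lmeasurable" by (intro lmeas_Int[OF S2l] hs_sets3)
    qed
    finally show False using mD by simp
  qed
  have "measure lebesgue S1 > 0" using h1 mK by (simp add: halv_def S1_def)
  then obtain p where p: "p \<in> interior K" "p \<bullet> e1 > x \<bullet> e1"
    using pos_int[OF KK(1,2), of S1] by (auto simp: S1_def)
  have "measure lebesgue (K \<inter> {y. y \<bullet> e1 < x \<bullet> e1}) > 0" using h1 mK by (simp add: halv_def)
  then obtain q where q: "q \<in> interior K" "q \<bullet> e1 < x \<bullet> e1"
    using pos_int[OF KK(1,2), of "K \<inter> {y. y \<bullet> e1 < x \<bullet> e1}"] by auto
  define s where "s = (p \<bullet> e1 - x \<bullet> e1) / (p \<bullet> e1 - q \<bullet> e1)"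
  have s01: "0 \<le> s" "s \<le> 1" using p(2) q(2) by (auto simp: s_def field_simps)
  define w where "w = (1 - s) *\<^sub>R p + s *\<^sub>R q"
  have wK: "w \<in> interior K" unfolding w_def
    using convexD[OF convex_interior[OF KK(1)] p(1) q(1)] s01 by auto
  have "w \<bullet> e1 = p \<bullet> e1 - s * (p \<bullet> e1 - q \<bullet> e1)" by (simp add: w_def algebra_simps)
  also have "\<dots> = x \<bullet> e1" using p(2) q(2) by (simp add: s_def)
  finally have we: "w \<bullet> e1 = x \<bullet> e1" .
  obtain r where r: "r > 0" "ball w r \<subseteq> interior K"
    using wK open_contains_ball open_interior by blast
  define c where "c = e1 \<bullet> e2"
  have c1: "\<bar>c\<bar> \<le> 1" using Cauchy_Schwarz_ineq2[of e1 e2] e by (simp add: c_def)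
  have ee1: "e1 \<bullet> e1 = 1" "e2 \<bullet> e2 = 1" using e by (simp_all add: dot_square_norm)
  have c2: "1 + c > 0"
  proof (rule ccontr)
    assume "\<not> 1 + c > 0"
    then have "c = -1" using c1 by linarith
    then have "(e1 + e2) \<bullet> (e1 + e2) = 0"
      by (simp add: inner_add_left inner_add_right ee1 c_def inner_commute)
    then have "e1 + e2 = 0" by simp
    then show False using e(3) by (simp add: add_eq_0_iff2)
  qed
  have inK: "z \<in> K" if "dist w z < r" for z
    using r that interior_subset by (auto simp: ball_def)
  define f2 where "f2 = w \<bullet> e2 - x \<bullet> e2"
  consider "f2 > 0" | "f2 < 0" | "f2 = 0" by linarith
  then show False
  proof cases
    case 1
    define \<epsilon> where "\<epsilon> = min (r/2) (f2/2)"
    have \<epsilon>: "0 < \<epsilon>" "\<epsilon> < r" "\<epsilon> < f2" using 1 r by (auto simp: \<epsilon>_def)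
    define z where "z = w + \<epsilon> *\<^sub>R e1"
    have "dist w z < r" using \<epsilon> e by (simp add: z_def dist_norm)
    then have "z \<in> K" by (rule inK)
    moreover have "z \<bullet> e1 > x \<bullet> e1" using \<epsilon> we ee1 by (simp add: z_def inner_add_left)
    moreover have "z \<bullet> e2 > x \<bullet> e2"
    proof -
      have "z \<bullet> e2 = w \<bullet> e2 + \<epsilon> * c" by (simp add: z_def inner_add_left c_def)
      moreover have "\<epsilon> * c \<ge> - \<epsilon>" using mult_left_mono[of "-1" c \<epsilon>] c1 \<epsilon>(1) by simp
      ultimately show ?thesis using \<epsilon> by (simp add: f2_def)
    qed
    ultimately show False using A by blast
  next
    case 2
    define \<epsilon> where "\<epsilon> = min (r/2) (- f2/2)"
    have \<epsilon>: "0 < \<epsilon>" "\<epsilon> < r" "\<epsilon> < - f2" using 2 r by (auto simp: \<epsilon>_def)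
    define z where "z = w - \<epsilon> *\<^sub>R e1"
    have "dist w z < r" using \<epsilon> e by (simp add: z_def dist_norm)
    then have "z \<in> interior K" using r by auto
    moreover have "z \<bullet> e1 < x \<bullet> e1" using \<epsilon> we ee1 by (simp add: z_def inner_diff_left)
    moreover have "z \<bullet> e2 < x \<bullet> e2"
    proof -
      have "z \<bullet> e2 = w \<bullet> e2 - \<epsilon> * c" by (simp add: z_def inner_diff_left c_def)
      moreover have "\<epsilon> * c \<ge> - \<epsilon>" using mult_left_mono[of "-1" c \<epsilon>] c1 \<epsilon>(1) by simp
      ultimately show ?thesis using \<epsilon> by (simp add: f2_def)
    qed
    ultimately have "z \<in> D" by (simp add: D_def)
    then show False using D0 by blast
  next
    case 3
    define \<epsilon> where "\<epsilon> = r / 4"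
    have \<epsilon>: "0 < \<epsilon>" using r by (simp add: \<epsilon>_def)
    define z where "z = w + \<epsilon> *\<^sub>R (e1 + e2)"
    have "norm (e1 + e2) \<le> 2" using norm_triangle_ineq[of e1 e2] e by simp
    then have "norm (\<epsilon> *\<^sub>R (e1 + e2)) \<le> \<epsilon> * 2" using \<epsilon> by (simp add: mult_left_mono)
    then have "dist w z < r" using \<epsilon> r by (simp add: z_def dist_norm \<epsilon>_def)
    then have "z \<in> K" by (rule inK)
    moreover have "z \<bullet> e1 > x \<bullet> e1"
      using \<epsilon> we ee1 c2 by (simp add: z_def inner_add_left inner_add_right c_def inner_commute)
    moreover have "z \<bullet> e2 > x \<bullet> e2"
      using \<epsilon> 3 ee1 c2 by (simp add: z_def f2_def inner_add_left inner_add_right c_def inner_commute)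
    ultimately show False using A by blast
  qed
qed



lemma forward:
  fixes K :: "'a::euclidean_space set"
  assumes dim: "DIM('a) \<ge> 2" and K: "convex_body K" and d: "0 < \<delta>" "\<delta> < 1" "\<delta> \<noteq> 1/2"
    and L: "affine L" "aff_dim L = int DIM('a) - 2" "x \<in> L" "L \<inter> interior K = {}"
  shows "\<exists>\<theta>1 \<theta>2. norm \<theta>1 = 1 \<and> norm \<theta>2 = 1 \<and>
          flot_hyperplane K \<delta> \<theta>1 \<noteq> flot_hyperplane K \<delta> \<theta>2 \<and>
          L \<subseteq> flot_hyperplane K \<delta> \<theta>1 \<and> L \<subseteq> flot_hyperplane K \<delta> \<theta>2"
proof -
  have KK: "convex K" "compact K" "interior K \<noteq> {}" using K by (auto simp: convex_body_def)
  have Kl: "K \<in> lmeasurable" using KK lmeasurable_compact by blast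
  have mK: "0 < measure lebesgue K" using body_pos KK by blast
  obtain u where u: "norm u = 1" "\<And>y. y \<in> L \<Longrightarrow> (y - x) \<bullet> u = 0" "\<And>z. z \<in> K \<Longrightarrow> z \<bullet> u \<ge> x \<bullet> u"
    using sep_affine[OF K L(1,3,4)] by blast
  define V where "V = (\<lambda>y. y - x) ` L"
  have "aff_dim L = int (dim V)" unfolding V_def
    by (rule aff_dim_eq_dim_subtract) (simp add: L(3) hull_inc)
  then have dimV: "dim V = DIM('a) - 2" using L(2) dim by linarith
  have "dim (insert u V) \<le> dim V + 1" by (simp add: dim_insert)
  then have "dim (insert u V) < DIM('a)" using dimV dim by linarith
  then obtain w0 where w0: "w0 \<noteq> 0" "\<And>y. y \<in> span (insert u V) \<Longrightarrow> orthogonal w0 y"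
    by (rule orthogonal_to_subspace_exists) blast
  define w where "w = w0 /\<^sub>R norm w0"
  have ww: "w \<bullet> w = 1" using w0(1) by (simp add: w_def inner_commute dot_square_norm power2_eq_square)
  have uu: "u \<bullet> u = 1" using u(1) by (simp add: dot_square_norm)
  have "orthogonal w0 u" using w0(2) span_base[of u "insert u V"] by blast
  then have wu: "w \<bullet> u = 0" "u \<bullet> w = 0" by (auto simp: w_def orthogonal_def inner_commute)
  have wL: "(y - x) \<bullet> w = 0" if "y \<in> L" for y
  proof -
    have "y - x \<in> span (insert u V)" using that by (intro span_base) (auto simp: V_def)
    then have "orthogonal w0 (y - x)" using w0(2) by blast
    then show ?thesis by (simp add: w_def orthogonal_def inner_commute)
  qed
  define \<Theta> where "\<Theta> \<phi> = cos \<phi> *\<^sub>R u + sin \<phi> *\<^sub>R w" for \<phi>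
  have \<Theta>in: "\<Theta> a \<bullet> \<Theta> b = cos (a - b)" for a b
    by (simp add: \<Theta>_def inner_add_left inner_add_right uu ww wu cos_diff)
  have \<Theta>n: "norm (\<Theta> a) = 1" for a using \<Theta>in[of a a] by (simp add: norm_eq_1)
  have \<Theta>0: "\<Theta> a \<noteq> 0" for a using \<Theta>n[of a] by auto
  have \<Theta>L: "(y - x) \<bullet> \<Theta> a = 0" if "y \<in> L" for y a
    using u(2)[OF that] wL[OF that] by (simp add: \<Theta>_def inner_add_right)
  define g where "g \<phi> = measure lebesgue (K \<inter> {y. y \<bullet> \<Theta> \<phi> \<ge> x \<bullet> \<Theta> \<phi>})" for \<phi>
  have cont: "continuous_on {0..pi} g"
    unfolding continuous_on_sequentially
  proof (intro allI ballI impI)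
    fix s :: "nat \<Rightarrow> real" and t assume "(\<forall>n. s n \<in> {0..pi}) \<and> s \<longlonglongrightarrow> t"
    then have st: "s \<longlonglongrightarrow> t" by blast
    have 1: "(\<lambda>n. \<Theta> (s n)) \<longlonglongrightarrow> \<Theta> t" unfolding \<Theta>_def by (intro tendsto_intros st)
    have 2: "(\<lambda>n. x \<bullet> \<Theta> (s n)) \<longlonglongrightarrow> x \<bullet> \<Theta> t" by (intro tendsto_intros 1)
    from meas_cont[OF KK(2) \<Theta>0 1 2]
    show "(g \<circ> s) \<longlonglongrightarrow> g t" by (simp add: g_def o_def)
  qed
  have "K \<inter> {y. y \<bullet> \<Theta> 0 \<ge> x \<bullet> \<Theta> 0} = K" using u(3) by (auto simp: \<Theta>_def)
  then have g0: "g 0 = measure lebesgue K" by (simp add: g_def)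
  have "K \<inter> {y. y \<bullet> \<Theta> pi \<ge> x \<bullet> \<Theta> pi} \<in> null_sets lebesgue"
  proof (rule null_sets_subset[OF hyp_null[of u "x \<bullet> u"]])
    show "u \<noteq> 0" using u(1) by auto
    show "K \<inter> {y. y \<bullet> \<Theta> pi \<ge> x \<bullet> \<Theta> pi} \<in> sets lebesgue"
      by (intro fmeasurableD lmeas_Int[OF Kl] hs_sets)
    show "K \<inter> {y. y \<bullet> \<Theta> pi \<ge> x \<bullet> \<Theta> pi} \<subseteq> {y. y \<bullet> u = x \<bullet> u}"
      using u(3) by (force simp: \<Theta>_def)
  qed
  then have gpi: "g pi = 0" by (simp add: g_def measure_eq_0_null_sets)
  have "g pi \<le> \<delta> * measure lebesgue K" "\<delta> * measure lebesgue K \<le> g 0"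
    using g0 gpi d mK by auto
  from IVT2'[OF this _ cont] obtain \<phi>1 where p1: "0 \<le> \<phi>1" "\<phi>1 \<le> pi" "g \<phi>1 = \<delta> * measure lebesgue K"
    by auto
  have "g pi \<le> (1 - \<delta>) * measure lebesgue K" "(1 - \<delta>) * measure lebesgue K \<le> g 0"
    using g0 gpi d mK by auto
  from IVT2'[OF this _ cont] obtain \<phi>2 where p2: "0 \<le> \<phi>2" "\<phi>2 \<le> pi" "g \<phi>2 = (1 - \<delta>) * measure lebesgue K"
    by auto
  have p1o: "\<phi>1 \<noteq> 0" "\<phi>1 \<noteq> pi" using p1(3) g0 gpi d mK by auto
  define \<theta>1 where "\<theta>1 = \<Theta> \<phi>1"
  define \<theta>2 where "\<theta>2 = - \<Theta> \<phi>2"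
  have t1: "tK K \<theta>1 \<delta> = x \<bullet> \<theta>1"
    using tK_eq[OF K \<Theta>0 d(1,2)] p1(3) by (simp add: \<theta>1_def g_def Hminus_def)
  have "measure lebesgue (K \<inter> Hminus \<theta>2 (x \<bullet> \<theta>2)) = measure lebesgue (K \<inter> {y. y \<bullet> \<Theta> \<phi>2 \<le> x \<bullet> \<Theta> \<phi>2})"
    by (simp add: \<theta>2_def Hminus_def)
  also have "\<dots> = measure lebesgue (K \<inter> {y. y \<bullet> \<Theta> \<phi>2 < x \<bullet> \<Theta> \<phi>2})"
    by (rule meas_le_lt[OF Kl \<Theta>0])
  also have "\<dots> = measure lebesgue K - g \<phi>2"
    using meas_split[OF Kl \<Theta>0[of \<phi>2], of "x \<bullet> \<Theta> \<phi>2"] meas_ge_gt[OF Kl \<Theta>0[of \<phi>2], of "x \<bullet> \<Theta> \<phi>2"]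
    by (simp add: g_def)
  also have "\<dots> = \<delta> * measure lebesgue K" using p2(3) by (simp add: algebra_simps)
  finally have t2: "tK K \<theta>2 \<delta> = x \<bullet> \<theta>2"
    using tK_eq[OF K _ d(1,2)] \<Theta>0 by (simp add: \<theta>2_def)
  have H1: "flot_hyperplane K \<delta> \<theta>1 = {y. y \<bullet> \<theta>1 = x \<bullet> \<theta>1}" by (simp add: flot_hyperplane_def t1)
  have H2: "flot_hyperplane K \<delta> \<theta>2 = {y. y \<bullet> \<theta>2 = x \<bullet> \<theta>2}" by (simp add: flot_hyperplane_def t2)
  have L1: "L \<subseteq> flot_hyperplane K \<delta> \<theta>1" unfolding H1
    using \<Theta>L by (force simp: \<theta>1_def inner_diff_left)
  have L2: "L \<subseteq> flot_hyperplane K \<delta> \<theta>2" unfolding H2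
    using \<Theta>L by (force simp: \<theta>2_def inner_diff_left)
  have ne: "flot_hyperplane K \<delta> \<theta>1 \<noteq> flot_hyperplane K \<delta> \<theta>2"
  proof
    assume "flot_hyperplane K \<delta> \<theta>1 = flot_hyperplane K \<delta> \<theta>2"
    then have eq: "{y. y \<bullet> \<theta>1 = x \<bullet> \<theta>1} = {y. y \<bullet> \<theta>2 = x \<bullet> \<theta>2}" using H1 H2 by simp
    define c where "c = cos (\<phi>1 - \<phi>2)"
    define y0 where "y0 = x + (\<Theta> \<phi>2 - c *\<^sub>R \<Theta> \<phi>1)"
    have "y0 \<bullet> \<theta>1 = x \<bullet> \<theta>1"
      using \<Theta>in[of \<phi>2 \<phi>1] \<Theta>in[of \<phi>1 \<phi>1]
      by (simp add: y0_def \<theta>1_def c_def inner_add_left inner_diff_left cos_diff mult.commute)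
    then have "y0 \<bullet> \<theta>2 = x \<bullet> \<theta>2" using eq by blast
    then have "1 - c * c = 0"
      using \<Theta>in[of \<phi>2 \<phi>2] \<Theta>in[of \<phi>1 \<phi>2]
      by (simp add: y0_def \<theta>2_def c_def inner_add_left inner_diff_left)
    then have sz: "sin (\<phi>1 - \<phi>2) = 0"
      using sin_cos_squared_add[of "\<phi>1 - \<phi>2"] by (simp add: c_def power2_eq_square)
    have "0 < \<phi>1" "\<phi>1 < pi" using p1(1,2) p1o by (auto simp: less_le)
    then have "- pi < \<phi>1 - \<phi>2" "\<phi>1 - \<phi>2 < pi" using p2(1,2) by linarith+
    from sin_eq_0_pi[OF this sz] have "\<phi>1 = \<phi>2" by simp
    then have "\<delta> * measure lebesgue K = (1 - \<delta>) * measure lebesgue K" using p1(3) p2(3) by simp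
    then have "\<delta> = 1 - \<delta>" using mK by simp
    then show False using d(3) by simp
  qed
  show ?thesis
    using \<Theta>n ne L1 L2 by (intro exI[of _ \<theta>1] exI[of _ \<theta>2]) (simp add: \<theta>1_def \<theta>2_def)
qed



lemma backward:
  fixes K :: "'a::euclidean_space set"
  assumes dim: "DIM('a) \<ge> 2" and K: "convex_body K"
  shows "\<exists>x \<in> frontier K. \<exists>L :: 'a set.
       affine L \<and> aff_dim L = int DIM('a) - 2 \<and> x \<in> L \<and> L \<inter> interior K = {} \<and>
       \<not> (\<exists>\<theta>1 \<theta>2. norm \<theta>1 = 1 \<and> norm \<theta>2 = 1 \<and>
          flot_hyperplane K (1/2) \<theta>1 \<noteq> flot_hyperplane K (1/2) \<theta>2 \<and>
          L \<subseteq> flot_hyperplane K (1/2) \<theta>1 \<and> L \<subseteq> flot_hyperplane K (1/2) \<theta>2)"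
proof -
  have KK: "convex K" "compact K" "interior K \<noteq> {}" using K by (auto simp: convex_body_def)
  have Kl: "K \<in> lmeasurable" using KK lmeasurable_compact by blast
  have mK: "0 < measure lebesgue K" using body_pos KK by blast
  have "K \<noteq> {}" using KK(3) interior_subset by blast
  moreover have "K \<noteq> UNIV" using compact_imp_bounded[OF KK(2)] by auto
  ultimately obtain x where x: "x \<in> frontier K" using frontier_not_empty by blast
  have xi: "x \<notin> interior K" using x by (simp add: frontier_def)
  obtain u where u: "norm u = 1" "\<And>z. z \<in> K \<Longrightarrow> z \<bullet> u \<ge> x \<bullet> u"
    using sep_affine[OF K affine_sing, of x] xi by blast
  have u0: "u \<noteq> 0" using u(1) by auto
  define W where "W = {v. u \<bullet> v = 0}"
  have dW: "dim W = DIM('a) - 1" unfolding W_def using dim_hyperplane[OF u0] .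
  have sW: "subspace W" unfolding W_def by (rule subspace_hyperplane)
  have "DIM('a) - 2 \<le> dim W" using dW by simp
  then obtain T where T: "subspace T" "T \<subseteq> span W" "dim T = DIM('a) - 2"
    by (rule choose_subspace_of_subspace)
  have TW: "T \<subseteq> W" using T(2) sW by (metis span_eq_iff)
  define L where "L = (+) x ` T"
  have aL: "affine L" unfolding L_def using affine_translation subspace_imp_affine[OF T(1)] by blast
  have dL: "aff_dim L = int DIM('a) - 2"
    unfolding L_def aff_dim_translation_eq aff_dim_subspace[OF T(1)] T(3) using dim by simp
  have xL: "x \<in> L" unfolding L_def using subspace_0[OF T(1)] by force
  have intu: "z \<bullet> u > x \<bullet> u" if z: "z \<in> interior K" for z
  proof -
    obtain r where r: "r > 0" "ball z r \<subseteq> K"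
      using z open_contains_ball open_interior interior_subset by (metis subset_trans)
    have "z - (r/2) *\<^sub>R u \<in> ball z r" using r u(1) by (simp add: dist_norm)
    then have "(z - (r/2) *\<^sub>R u) \<bullet> u \<ge> x \<bullet> u" using r u(2) by blast
    then show ?thesis using r u(1) by (simp add: inner_diff_left dot_square_norm)
  qed
  have LK: "L \<inter> interior K = {}"
  proof (rule ccontr)
    assume "L \<inter> interior K \<noteq> {}"
    then obtain v where v: "v \<in> T" "x + v \<in> interior K" unfolding L_def by blast
    have "u \<bullet> v = 0" using v(1) TW W_def by blast
    then show False using intu[OF v(2)] by (simp add: inner_add_left inner_add_right inner_commute)
  qed
  have notwo: False if t: "norm \<theta>1 = 1" "norm \<theta>2 = 1"
      "flot_hyperplane K (1/2) \<theta>1 \<noteq> flot_hyperplane K (1/2) \<theta>2"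
      "L \<subseteq> flot_hyperplane K (1/2) \<theta>1" "L \<subseteq> flot_hyperplane K (1/2) \<theta>2" for \<theta>1 \<theta>2
  proof -
    have d: "(0::real) < 1/2" "(1::real)/2 < 1" by auto
    have Hi: "tK K \<theta> (1/2) = x \<bullet> \<theta> \<and> flot_hyperplane K (1/2) \<theta> = {y. y \<bullet> \<theta> = x \<bullet> \<theta>} \<and>
        (\<forall>v\<in>T. v \<bullet> \<theta> = 0) \<and> halv K x \<theta>"
      if th: "norm \<theta> = 1" "L \<subseteq> flot_hyperplane K (1/2) \<theta>" for \<theta>
    proof -
      have th0: "\<theta> \<noteq> 0" using th(1) by auto
      have tx: "tK K \<theta> (1/2) = x \<bullet> \<theta>" using th(2) xL by (auto simp: flot_hyperplane_def)
      have "v \<bullet> \<theta> = 0" if "v \<in> T" for v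
      proof -
        have "x + v \<in> L" using that by (simp add: L_def)
        then have "(x + v) \<bullet> \<theta> = x \<bullet> \<theta>" using th(2) tx by (auto simp: flot_hyperplane_def)
        then show ?thesis by (simp add: inner_add_left)
      qed
      moreover have "halv K x \<theta>"
      proof -
        have "measure lebesgue (K \<inter> {y. y \<bullet> \<theta> \<ge> x \<bullet> \<theta>}) = measure lebesgue K / 2"
          using tK_prop[OF K th0 d] tx by (simp add: Hminus_def)
        then have g: "measure lebesgue (K \<inter> {y. y \<bullet> \<theta> > x \<bullet> \<theta>}) = measure lebesgue K / 2"
          using meas_ge_gt[OF Kl th0] by simp
        then show ?thesis using meas_split[OF Kl th0, of "x \<bullet> \<theta>"] by (simp add: halv_def)
      qed
      ultimately show ?thesis using tx by (simp add: flot_hyperplane_def)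
    qed
    note h1 = Hi[OF t(1,4)] and h2 = Hi[OF t(2,5)]
    have n1: "\<theta>1 \<noteq> 0" "\<theta>2 \<noteq> 0" using t(1,2) by auto
    have par: False if k: "\<theta>1 = k *\<^sub>R \<theta>2" for k
    proof -
      have "\<bar>k\<bar> = 1" using t(1,2) k by simp
      then have "k = 1 \<or> k = -1" by linarith
      then show False
      proof
        assume "k = 1" then show False using t(3) h1 h2 k by simp
      next
        assume "k = -1" then have "\<theta>1 = - \<theta>2" using k by simp
        then show False using t(3) h1 h2 by (simp add: inner_minus_right)
      qed
    qed
    have "\<theta>1 \<notin> span {\<theta>2}" using par by (auto simp: span_singleton)
    then have d12: "dim {\<theta>1, \<theta>2} = 2" using n1 by (simp add: dim_insert)
    have orth: "a \<bullet> b = 0" if "a \<in> T" "b \<in> {u, \<theta>1, \<theta>2}" for a b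
      using that h1 h2 TW by (auto simp: W_def inner_commute)
    have "dim (T \<union> {u, \<theta>1, \<theta>2}) = dim T + dim {u, \<theta>1, \<theta>2}"
      by (rule dim_orthogonal_sum) (use orth in blast)
    moreover have "dim (T \<union> {u, \<theta>1, \<theta>2}) \<le> DIM('a)" by (rule dim_subset_UNIV)
    ultimately have "dim {u, \<theta>1, \<theta>2} \<le> 2" using T(3) dim by linarith
    then have "u \<in> span {\<theta>1, \<theta>2}" using d12 by (auto simp: dim_insert[of u "{\<theta>1, \<theta>2}"] split: if_splits)
    then obtain \<alpha> where "u - \<alpha> *\<^sub>R \<theta>1 \<in> span {\<theta>2}" using span_breakdown_eq by blast
    then obtain \<beta> where "u - \<alpha> *\<^sub>R \<theta>1 = \<beta> *\<^sub>R \<theta>2" by (auto simp: span_singleton)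
    then have ab: "u = \<alpha> *\<^sub>R \<theta>1 + \<beta> *\<^sub>R \<theta>2" by (metis diff_eq_eq add.commute)
    define s1 :: real where "s1 = (if \<alpha> \<ge> 0 then -1 else 1)"
    define s2 :: real where "s2 = (if \<beta> \<ge> 0 then -1 else 1)"
    define e1 where "e1 = s1 *\<^sub>R \<theta>1"
    define e2 where "e2 = s2 *\<^sub>R \<theta>2"
    have ne1: "norm e1 = 1" "norm e2 = 1" using t(1,2) by (simp_all add: e1_def e2_def s1_def s2_def)
    have he: "halv K x e1" "halv K x e2"
      using h1 h2 halv_neg by (auto simp: e1_def e2_def s1_def s2_def)
    have nn: "e1 \<noteq> - e2"
    proof
      assume "e1 = - e2"
      then have "\<theta>1 = (- s2 / s1) *\<^sub>R \<theta>2" by (auto simp: e1_def e2_def s1_def s2_def split: if_splits)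
      then show False by (rule par)
    qed
    show False
    proof (rule core[OF KK ne1 nn he])
      fix y assume y: "y \<in> K" "y \<bullet> e1 > x \<bullet> e1" "y \<bullet> e2 > x \<bullet> e2"
      define a1 where "a1 = (y - x) \<bullet> e1"
      define a2 where "a2 = (y - x) \<bullet> e2"
      have a: "a1 > 0" "a2 > 0" using y by (simp_all add: a1_def a2_def inner_diff_left)
      have "(y - x) \<bullet> u = - \<bar>\<alpha>\<bar> * a1 - \<bar>\<beta>\<bar> * a2"
        by (simp add: ab a1_def a2_def e1_def e2_def s1_def s2_def inner_add_right)
      moreover have "(y - x) \<bullet> u \<ge> 0" using u(2)[OF y(1)] by (simp add: inner_diff_left)
      ultimately have "\<bar>\<alpha>\<bar> * a1 + \<bar>\<beta>\<bar> * a2 \<le> 0" by linarith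
      moreover have "\<bar>\<alpha>\<bar> * a1 \<ge> 0" "\<bar>\<beta>\<bar> * a2 \<ge> 0" using a by simp_all
      ultimately have "\<bar>\<alpha>\<bar> * a1 = 0" "\<bar>\<beta>\<bar> * a2 = 0" by linarith+
      then have "\<alpha> = 0" "\<beta> = 0" using a by simp_all
      then show False using ab u0 by simp
    qed
  qed
  have nx: "\<not> (\<exists>\<theta>1 \<theta>2. norm \<theta>1 = 1 \<and> norm \<theta>2 = 1 \<and>
          flot_hyperplane K (1/2) \<theta>1 \<noteq> flot_hyperplane K (1/2) \<theta>2 \<and>
          L \<subseteq> flot_hyperplane K (1/2) \<theta>1 \<and> L \<subseteq> flot_hyperplane K (1/2) \<theta>2)"
    by (intro notI, elim exE conjE) (rule notwo)
  show ?thesis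
    by (rule bexI[OF _ x], rule exI[of _ L]) (intro conjI aL dL xL LK nx)
qed


theorem lemma3:
  fixes K :: "'a::euclidean_space set" and \<delta> :: real
  assumes "DIM('a) \<ge> 2"
    and "convex_body K"
    and "0 < \<delta>" and "\<delta> < 1"
  shows "\<delta> \<noteq> 1/2 \<longleftrightarrow>
    (\<forall>x \<in> frontier K. \<forall>L :: 'a set.
       affine L \<and> aff_dim L = int DIM('a) - 2 \<and> x \<in> L \<and> L \<inter> interior K = {} \<longrightarrow>
       (\<exists>\<theta>1 \<theta>2. norm \<theta>1 = 1 \<and> norm \<theta>2 = 1 \<and>
          flot_hyperplane K \<delta> \<theta>1 \<noteq> flot_hyperplane K \<delta> \<theta>2 \<and>
          L \<subseteq> flot_hyperplane K \<delta> \<theta>1 \<and> L \<subseteq> flot_hyperplane K \<delta> \<theta>2))"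
proof
  assume "\<delta> \<noteq> 1/2"
  then show "\<forall>x \<in> frontier K. \<forall>L :: 'a set.
       affine L \<and> aff_dim L = int DIM('a) - 2 \<and> x \<in> L \<and> L \<inter> interior K = {} \<longrightarrow>
       (\<exists>\<theta>1 \<theta>2. norm \<theta>1 = 1 \<and> norm \<theta>2 = 1 \<and>
          flot_hyperplane K \<delta> \<theta>1 \<noteq> flot_hyperplane K \<delta> \<theta>2 \<and>
          L \<subseteq> flot_hyperplane K \<delta> \<theta>1 \<and> L \<subseteq> flot_hyperplane K \<delta> \<theta>2)"
    using forward[OF assms(1,2,3,4)] by blast
next
  assume H: "\<forall>x \<in> frontier K. \<forall>L :: 'a set.
       affine L \<and> aff_dim L = int DIM('a) - 2 \<and> x \<in> L \<and> L \<inter> interior K = {} \<longrightarrow>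
       (\<exists>\<theta>1 \<theta>2. norm \<theta>1 = 1 \<and> norm \<theta>2 = 1 \<and>
          flot_hyperplane K \<delta> \<theta>1 \<noteq> flot_hyperplane K \<delta> \<theta>2 \<and>
          L \<subseteq> flot_hyperplane K \<delta> \<theta>1 \<and> L \<subseteq> flot_hyperplane K \<delta> \<theta>2)"
  show "\<delta> \<noteq> 1/2"
  proof
    assume d: "\<delta> = 1/2"
    obtain x L where xL: "x \<in> frontier K" "affine L" "aff_dim L = int DIM('a) - 2" "x \<in> L"
      "L \<inter> interior K = {}"
      and nx: "\<not> (\<exists>\<theta>1 \<theta>2. norm \<theta>1 = 1 \<and> norm \<theta>2 = 1 \<and>
          flot_hyperplane K (1/2) \<theta>1 \<noteq> flot_hyperplane K (1/2) \<theta>2 \<and>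
          L \<subseteq> flot_hyperplane K (1/2) \<theta>1 \<and> L \<subseteq> flot_hyperplane K (1/2) \<theta>2)"
      using backward[OF assms(1,2)] by blast
    have "\<exists>\<theta>1 \<theta>2. norm \<theta>1 = 1 \<and> norm \<theta>2 = 1 \<and>
          flot_hyperplane K \<delta> \<theta>1 \<noteq> flot_hyperplane K \<delta> \<theta>2 \<and>
          L \<subseteq> flot_hyperplane K \<delta> \<theta>1 \<and> L \<subseteq> flot_hyperplane K \<delta> \<theta>2"
      using H xL by blast
    then show False using nx d by simp
  qed
qed

end
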